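(* Let $p\geq 1$, $N\in\mathbb{N}$, and let $\Psi$ be the set of functions $\psi:\mathbb{R}^N\to\mathbb{R}$ such that $$|\psi(\tilde{\boldsymbol\xi})-\psi(\widehat{\boldsymbol\xi})|\leq \frac1N\sum_{k=1}^N c_p(\tilde\xi^k,\widehat\xi^k)\,|\tilde\xi^k-\widehat\xi^k|\quad\text{for all }\tilde{\boldsymbol\xi}=(\tilde\xi^1,\dots,\tilde\xi^N),\ \widehat{\boldsymbol\xi}=(\widehat\xi^1,\dots,\widehat\xi^N)\in\mathbb{R}^N.$$ Then for all $P,Q\in\mathscr{P}_p(\mathbb{R})$, $$\mathsf{d}_\Psi(P^{\otimes N},Q^{\otimes N})\leq \mathsf{d}_{FM,p}(P,Q)<+\infty,$$ where $\mathsf{d}_\Psi(\mu,\nu)=\sup_{\psi\in\Psi}\left|\int_{\mathbb{R}^N}\psi\,d\mu-\int_{\mathbb{R}^N}\psi\,d\nu\right|$ and $P^{\otimes N}$, $Q^{\otimes N}$ are the $N$-fold product measures on $\mathbb{R}^N$.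
   Context: $\mathscr{P}(\mathbb{R})$ is the set of Borel probability measures on $\mathbb{R}$. For $p\geq1$, $c_p(\xi,\tilde\xi)=\max\{1,|\xi|,|\tilde\xi|\}^{p-1}$; $\mathcal{F}_p(\mathbb{R})$ is the set of $\psi:\mathbb{R}\to\mathbb{R}$ with $|\psi(\xi)-\psi(\tilde\xi)|\leq c_p(\xi,\tilde\xi)|\xi-\tilde\xi|$ for all $\xi,\tilde\xi$; the Fortet–Mourier metric is $\mathsf{d}_{FM,p}(P,Q)=\sup_{\psi\in\mathcal{F}_p(\mathbb{R})}|\int\psi\,dP-\int\psi\,dQ|$; and $\mathscr{P}_p(\mathbb{R})=\{P\in\mathscr{P}(\mathbb{R}):\mathsf{d}_{FM,p}(P,\delta_0)<+\infty\}$, with $\delta_0$ the Dirac measure at $0$. *)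

theory Defs
  imports "HOL-Probability.Probability"
begin

definition cp :: "real \<Rightarrow> real \<Rightarrow> real \<Rightarrow> real" where
  "cp p x y = (max 1 (max \<bar>x\<bar> \<bar>y\<bar>)) powr (p - 1)"

definition Fp :: "real \<Rightarrow> (real \<Rightarrow> real) set" where
  "Fp p = {\<psi>. \<forall>x y. \<bar>\<psi> x - \<psi> y\<bar> \<le> cp p x y * \<bar>x - y\<bar>}"

text \<open>|int psi dM - int psi dN|, taken to be +infinity when psi is not integrable
  w.r.t. one of the measures (the difference of integrals is then not a finite real).\<close>
definition int_diff :: "'a measure \<Rightarrow> 'a measure \<Rightarrow> ('a \<Rightarrow> real) \<Rightarrow> ereal" where
  "int_diff M N \<psi> = (if integrable M \<psi> \<and> integrable N \<psi>
      then ereal \<bar>integral\<^sup>L M \<psi> - integral\<^sup>L N \<psi>\<bar> else \<infinity>)"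

definition dFM :: "real \<Rightarrow> real measure \<Rightarrow> real measure \<Rightarrow> ereal" where
  "dFM p P Q = (SUP \<psi>\<in>Fp p. int_diff P Q \<psi>)"

definition Pp :: "real \<Rightarrow> real measure set" where
  "Pp p = {P. prob_space P \<and> sets P = sets borel \<and> dFM p P (return borel 0) < \<infinity>}"

text \<open>The class Psi on R^N, with R^N represented as functions 'n => real for a finite
  index type 'n with N = CARD('n).\<close>
definition PsiN :: "real \<Rightarrow> (('n::finite \<Rightarrow> real) \<Rightarrow> real) set" where
  "PsiN p = {\<psi>. \<forall>x y. \<bar>\<psi> x - \<psi> y\<bar>
       \<le> (1 / real CARD('n)) * (\<Sum>k\<in>UNIV. cp p (x k) (y k) * \<bar>x k - y k\<bar>)}"

definition dPsi :: "real \<Rightarrow> ('n::finite \<Rightarrow> real) measure \<Rightarrow> ('n \<Rightarrow> real) measure \<Rightarrow> ereal" where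
  "dPsi p M N = (SUP \<psi>\<in>PsiN p. int_diff M N \<psi>)"

end

theory Submission
  imports Defs
begin


lemma int_diff_nonneg: "int_diff M N f \<ge> 0"
  unfolding int_diff_def by auto

lemma zero_Fp: "(\<lambda>_. 0) \<in> Fp p"
  unfolding Fp_def cp_def by auto

lemma dFM_nonneg: "dFM p P Q \<ge> 0"
  unfolding dFM_def by (meson SUP_upper2 int_diff_nonneg zero_Fp)

lemma int_diff_le_dFM: "f \<in> Fp p \<Longrightarrow> int_diff P Q f \<le> dFM p P Q"
  unfolding dFM_def by (rule SUP_upper)

lemma Pp_integrable:
  assumes "P \<in> Pp p" "f \<in> Fp p"
  shows "integrable P f"
proof (rule ccontr)
  assume "\<not> integrable P f"
  then have "int_diff P (return borel 0) f = \<infinity>" unfolding int_diff_def by auto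
  with int_diff_le_dFM[OF assms(2), of P "return borel 0"] assms(1) show False
    unfolding Pp_def by auto
qed

lemma Pp_bound:
  assumes "P \<in> Pp p" "f \<in> Fp p"
  shows "ereal \<bar>integral\<^sup>L P f - f 0\<bar> \<le> dFM p P (return borel 0)"
proof -
  have "int_diff P (return borel 0) f \<le> dFM p P (return borel 0)" by (rule int_diff_le_dFM[OF assms(2)])
  moreover have "int_diff P (return borel 0) f \<noteq> \<infinity>"
    using calculation assms(1) unfolding Pp_def by auto
  ultimately show ?thesis unfolding int_diff_def
    by (auto split: if_splits simp: integral_return)
qed

lemma pair_bound:
  assumes "P \<in> Pp p" "Q \<in> Pp p" "f \<in> Fp p"
  shows "ereal \<bar>integral\<^sup>L P f - integral\<^sup>L Q f\<bar> \<le> dFM p P Q"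
  using int_diff_le_dFM[OF assms(3), of P Q] Pp_integrable[OF assms(1,3)] Pp_integrable[OF assms(2,3)]
  unfolding int_diff_def by auto

lemma dFM_finite:
  assumes "P \<in> Pp p" "Q \<in> Pp p"
  shows "dFM p P Q < \<infinity>"
proof -
  let ?A = "dFM p P (return borel 0)" and ?B = "dFM p Q (return borel 0)"
  have le: "dFM p P Q \<le> ?A + ?B"
    unfolding dFM_def[of p P Q]
  proof (rule SUP_least)
    fix f assume f: "f \<in> Fp p"
    have "int_diff P Q f = ereal \<bar>integral\<^sup>L P f - integral\<^sup>L Q f\<bar>"
      using Pp_integrable[OF assms(1) f] Pp_integrable[OF assms(2) f] unfolding int_diff_def by auto
    also have "\<dots> \<le> ereal \<bar>integral\<^sup>L P f - f 0\<bar> + ereal \<bar>integral\<^sup>L Q f - f 0\<bar>"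
    proof -
      have "\<bar>integral\<^sup>L P f - integral\<^sup>L Q f\<bar> \<le> \<bar>integral\<^sup>L P f - f 0\<bar> + \<bar>integral\<^sup>L Q f - f 0\<bar>"
        by linarith
      then show ?thesis by simp
    qed
    also have "\<dots> \<le> ?A + ?B" by (intro add_mono Pp_bound assms f)
    finally show "int_diff P Q f \<le> ?A + ?B" .
  qed
  moreover have "?A < \<infinity>" "?B < \<infinity>" using assms unfolding Pp_def by auto
  moreover have "?A \<ge> 0" "?B \<ge> 0" by (rule dFM_nonneg)+
  moreover have "?A + ?B \<noteq> \<infinity>" using calculation by simp
  then have "?A + ?B < \<infinity>" by (simp add: less_top)
  then show ?thesis using le by (rule le_less_trans[rotated])
qed



lemma powr_tangent:
  fixes p r s :: real
  assumes p: "p \<ge> 1" and r: "1 \<le> r" and rs: "r \<le> s"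
  shows "s powr p - r powr p \<le> p * s powr (p - 1) * (s - r)"
proof (cases "r = s")
  case True then show ?thesis by simp
next
  case False
  then have lt: "r < s" using rs by simp
  have "\<And>x. r \<le> x \<Longrightarrow> x \<le> s \<Longrightarrow> DERIV (\<lambda>x. x powr p) x :> p * x powr (p - 1)"
    using r by (auto intro!: has_real_derivative_powr)
  from MVT2[OF lt this] obtain z where z: "r < z" "z < s" "s powr p - r powr p = (s - r) * (p * z powr (p - 1))"
    by blast
  have "z powr (p - 1) \<le> s powr (p - 1)" using z r p by (intro powr_mono2) auto
  then have "(s - r) * (p * z powr (p - 1)) \<le> (s - r) * (p * s powr (p - 1))"
    using lt p by (intro mult_left_mono) auto
  then show ?thesis using z(3) by (simp add: algebra_simps)
qed

definition hh :: "real \<Rightarrow> real \<Rightarrow> real" where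
  "hh p r = max 1 r powr (p - 1) * r"

lemma hh_mono:
  assumes p: "p \<ge> 1" and r: "0 \<le> r" and rs: "r \<le> s"
  shows "hh p r \<le> hh p s"
proof -
  have "max 1 r powr (p - 1) \<le> max 1 s powr (p - 1)" using p rs by (intro powr_mono2) auto
  then show ?thesis unfolding hh_def using r rs by (intro mult_mono) auto
qed

lemma hh_ineq:
  assumes p: "p \<ge> 1" and r: "0 \<le> r" and rs: "r \<le> s"
  shows "hh p s - hh p r \<le> p * max 1 s powr (p - 1) * (s - r)"
proof -
  have ge1: "max 1 s powr (p - 1) \<ge> 1" using p by (intro ge_one_powr_ge_zero) auto
  have hs: "hh p s = s powr p" if "s \<ge> 1" for s
  proof -
    have "s powr (p - 1) * s = s powr (p - 1) * s powr 1" using that by simp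
    also have "\<dots> = s powr p" by (subst powr_add[symmetric]) simp
    finally show ?thesis unfolding hh_def using that by simp
  qed
  have pge: "1 \<le> p * max 1 s powr (p - 1)"
  proof -
    have "1 * 1 \<le> p * max 1 s powr (p - 1)" by (rule mult_mono) (use p ge1 in auto)
    then show ?thesis by simp
  qed
  consider "s \<le> 1" | "1 \<le> r" | "r < 1" "1 < s" by linarith
  then show ?thesis
  proof cases
    case 1
    then have "hh p s - hh p r = s - r" using rs unfolding hh_def by simp
    also have "\<dots> \<le> 1 * (s - r)" by simp
    also have "\<dots> \<le> p * max 1 s powr (p - 1) * (s - r)"
      using rs pge by (intro mult_right_mono) auto
    finally show ?thesis .
  next
    case 2
    then show ?thesis using hs[of s] hs[of r] rs powr_tangent[OF p 2 rs] by simp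
  next
    case 3
    have a: "s powr p - 1 \<le> p * s powr (p - 1) * (s - 1)"
      using powr_tangent[OF p _ , of 1 s] 3 by simp
    from pge have b: "1 - r \<le> p * max 1 s powr (p - 1) * (1 - r)" using 3
      using mult_right_mono[OF pge, of "1 - r"] by simp
    have "hh p r = r" using 3 unfolding hh_def by simp
    then show ?thesis using hs[of s] 3 a b by (simp add: algebra_simps)
  qed
qed

definition phi :: "real \<Rightarrow> real \<Rightarrow> real" where
  "phi p t = cp p t 0 * \<bar>t\<bar>"

lemma phi_hh: "phi p t = hh p \<bar>t\<bar>"
  unfolding phi_def cp_def hh_def by simp

lemma phi_Fp:
  assumes p: "p \<ge> 1"
  shows "(\<lambda>t. phi p t / p) \<in> Fp p"
proof -
  have main: "\<bar>phi p x - phi p y\<bar> \<le> p * (cp p x y * \<bar>x - y\<bar>)" if xy: "\<bar>x\<bar> \<le> \<bar>y\<bar>" for x y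
  proof -
    have "\<bar>phi p x - phi p y\<bar> = hh p \<bar>y\<bar> - hh p \<bar>x\<bar>"
      using hh_mono[OF p _ xy] unfolding phi_hh by simp
    also have "\<dots> \<le> p * max 1 \<bar>y\<bar> powr (p - 1) * (\<bar>y\<bar> - \<bar>x\<bar>)"
      by (rule hh_ineq[OF p _ xy]) simp
    also have "\<dots> \<le> p * max 1 \<bar>y\<bar> powr (p - 1) * \<bar>x - y\<bar>"
      using p by (intro mult_left_mono) auto
    also have "max 1 \<bar>y\<bar> = max 1 (max \<bar>x\<bar> \<bar>y\<bar>)" using xy by simp
    finally show ?thesis unfolding cp_def by simp
  qed
  have "\<bar>phi p x - phi p y\<bar> \<le> p * (cp p x y * \<bar>x - y\<bar>)" for x y
  proof (cases "\<bar>x\<bar> \<le> \<bar>y\<bar>")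
    case True then show ?thesis by (rule main)
  next
    case False
    then have "\<bar>phi p y - phi p x\<bar> \<le> p * (cp p y x * \<bar>y - x\<bar>)" by (intro main) simp
    moreover have "cp p y x = cp p x y" unfolding cp_def by (simp add: max.commute)
    ultimately show ?thesis by (simp add: abs_minus_commute)
  qed
  then show ?thesis unfolding Fp_def using p
    by (auto simp: diff_divide_distrib[symmetric] pos_divide_le_eq mult.commute)
qed



lemma PsiN_cont:
  assumes psi: "\<psi> \<in> PsiN p"
  shows "continuous_on UNIV (\<psi> :: ('n::finite \<Rightarrow> real) \<Rightarrow> real)"
proof -
  have "isCont \<psi> x" for x
  proof -
    let ?B = "\<lambda>y. (1 / real CARD('n)) * (\<Sum>k\<in>UNIV. cp p (y k) (x k) * \<bar>y k - x k\<bar>)"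
    have comp: "((\<lambda>y. y k) \<longlongrightarrow> x k) (at x)" for k
      using continuous_on_product_coordinates[of k]
      by (metis UNIV_I continuous_on_def tendsto_within_open open_UNIV)
    have "(?B \<longlongrightarrow> (1 / real CARD('n)) * (\<Sum>k\<in>UNIV. cp p (x k) (x k) * \<bar>x k - x k\<bar>)) (at x)"
      unfolding cp_def
      by (intro tendsto_intros comp) (auto simp: max_def)
    then have B0: "(?B \<longlongrightarrow> 0) (at x)" by simp
    have "((\<lambda>y. \<psi> y - \<psi> x) \<longlongrightarrow> 0) (at x)"
      by (rule Lim_null_comparison[OF _ B0]) (use psi in \<open>auto simp: PsiN_def\<close>)
    then show ?thesis unfolding isCont_def by (simp add: LIM_zero_iff)
  qed
  then show ?thesis by (simp add: continuous_at_imp_continuous_on)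
qed

lemma PsiN_borel:
  assumes psi: "\<psi> \<in> PsiN p"
  shows "(\<psi> :: ('n::finite \<Rightarrow> real) \<Rightarrow> real) \<in> borel_measurable borel"
  by (rule borel_measurable_continuous_onI[OF PsiN_cont[OF psi]])

lemma PsiN_slice:
  assumes psi: "\<psi> \<in> PsiN p"
  shows "(\<lambda>t. real CARD('n) * \<psi> ((x :: 'n::finite \<Rightarrow> real)(j := t))) \<in> Fp p"
  unfolding Fp_def
proof (intro CollectI allI)
  fix s t :: real
  have "\<bar>\<psi> (x(j := s)) - \<psi> (x(j := t))\<bar> \<le> (1 / real CARD('n)) *
     (\<Sum>k\<in>UNIV. cp p ((x(j := s)) k) ((x(j := t)) k) * \<bar>(x(j := s)) k - (x(j := t)) k\<bar>)"
    using psi unfolding PsiN_def by blast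
  also have "(\<Sum>k\<in>UNIV. cp p ((x(j := s)) k) ((x(j := t)) k) * \<bar>(x(j := s)) k - (x(j := t)) k\<bar>)
     = (\<Sum>k\<in>UNIV. if k = j then cp p s t * \<bar>s - t\<bar> else 0)"
    by (intro sum.cong) auto
  also have "\<dots> = cp p s t * \<bar>s - t\<bar>" by simp
  finally have "\<bar>\<psi> (x(j := s)) - \<psi> (x(j := t))\<bar> \<le> (1 / real CARD('n)) * (cp p s t * \<bar>s - t\<bar>)" .
  then have "real CARD('n) * \<bar>\<psi> (x(j := s)) - \<psi> (x(j := t))\<bar> \<le> cp p s t * \<bar>s - t\<bar>"
    by (simp add: field_simps del: fun_upd_apply)
  then show "\<bar>real CARD('n) * \<psi> (x(j := s)) - real CARD('n) * \<psi> (x(j := t))\<bar> \<le> cp p s t * \<bar>s - t\<bar>"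
    by (simp add: right_diff_distrib[symmetric] abs_mult del: fun_upd_apply)
qed



lemma (in product_sigma_finite) product_integrable_insert_slice:
  fixes f :: "_ \<Rightarrow> real"
  assumes I: "finite I" "i \<notin> I"
    and f: "integrable (Pi\<^sub>M (insert i I) M) f"
  shows "integrable (Pi\<^sub>M I M) (\<lambda>x. \<integral>y. f (x(i:=y)) \<partial>M i)"
proof -
  interpret I: finite_product_sigma_finite M I by standard fact
  interpret J: finite_product_sigma_finite M "{i}" by standard simp
  have fin: "finite (I \<union> {i})" using I by auto
  interpret IJ: finite_product_sigma_finite M "I \<union> {i}" by standard fact
  interpret P: pair_sigma_finite "Pi\<^sub>M I M" "Pi\<^sub>M {i} M" ..
  have f': "integrable (Pi\<^sub>M (I \<union> {i}) M) f" using f by simp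
  have f_int: "integrable (Pi\<^sub>M I M \<Otimes>\<^sub>M Pi\<^sub>M {i} M) (\<lambda>x. f (merge I {i} x))"
  proof (rule integrable_distr[OF measurable_merge])
    have dm: "distr (Pi\<^sub>M I M \<Otimes>\<^sub>M Pi\<^sub>M {i} M) (Pi\<^sub>M (I \<union> {i}) M) (merge I {i}) = Pi\<^sub>M (I \<union> {i}) M"
      by (rule distr_merge) (use I in auto)
    show "integrable (distr (Pi\<^sub>M I M \<Otimes>\<^sub>M Pi\<^sub>M {i} M) (Pi\<^sub>M (I \<union> {i}) M) (merge I {i})) f"
      by (subst dm) (rule f')
  qed
  have A: "integrable (Pi\<^sub>M I M) (\<lambda>x. \<integral>y. f (merge I {i} (x, y)) \<partial>Pi\<^sub>M {i} M)"
    using P.integrable_fst'[OF f_int] by simp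
  have B: "(\<integral> y. f (merge I {i} (x,y)) \<partial>Pi\<^sub>M {i} M) = (\<integral>y. f (x(i := y)) \<partial>M i)"
    if x: "x \<in> space (Pi\<^sub>M I M)" for x
  proof -
    have f_borel: "f \<in> borel_measurable (Pi\<^sub>M (insert i I) M)"
      using f by auto
    have m: "(\<lambda>y. f (x(i := y))) \<in> borel_measurable (M i)"
      using measurable_comp[OF measurable_component_update f_borel, OF x \<open>i \<notin> I\<close>]
      unfolding comp_def .
    have "(\<integral> y. f (merge I {i} (x,y)) \<partial>Pi\<^sub>M {i} M) = (\<integral> xa. f (x(i := xa i)) \<partial>Pi\<^sub>M {i} M)"
      using x I by (auto intro!: Bochner_Integration.integral_cong arg_cong[where f=f] simp: merge_def space_PiM extensional_def PiE_def)
    also have "\<dots> = (\<integral>y. f (x(i := y)) \<partial>M i)"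
      by (rule product_integral_singleton[OF m])
    finally show ?thesis .
  qed
  show ?thesis by (rule iffD1[OF Bochner_Integration.integrable_cong[OF refl B] A])
qed

definition MM :: "real measure \<Rightarrow> real measure \<Rightarrow> 'n set \<Rightarrow> 'n \<Rightarrow> real measure" where
  "MM P Q S = (\<lambda>i. if i \<in> S then P else Q)"

lemma sets_PiM_MM:
  assumes "P \<in> Pp p" "Q \<in> Pp p"
  shows "sets (PiM (UNIV :: 'n::finite set) (MM P Q S)) = sets borel"
proof -
  have "sets (PiM (UNIV :: 'n set) (MM P Q S)) = sets (PiM (UNIV :: 'n set) (\<lambda>_. borel :: real measure))"
    using assms by (intro sets_PiM_cong) (auto simp: MM_def Pp_def)
  also have "\<dots> = sets borel" by (rule sets_PiM_equal_borel)
  finally show ?thesis .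
qed

lemma PsiN_measurable_MM:
  assumes "P \<in> Pp p" "Q \<in> Pp p" "\<psi> \<in> PsiN p"
  shows "(\<psi> :: ('n::finite \<Rightarrow> real) \<Rightarrow> real) \<in> borel_measurable (PiM UNIV (MM P Q S))"
  unfolding measurable_cong_sets[OF sets_PiM_MM[OF assms(1,2), of S] refl] by (rule PsiN_borel[OF assms(3)])

lemma prob_MM: "P \<in> Pp p \<Longrightarrow> Q \<in> Pp p \<Longrightarrow> prob_space (MM P Q S i)"
  by (auto simp: MM_def Pp_def)

lemma phi_integrable:
  assumes p: "p \<ge> 1" and P: "P \<in> Pp p"
  shows "integrable P (phi p)"
proof -
  have "integrable P (\<lambda>t. p * (phi p t / p))"
    by (intro integrable_mult_right Pp_integrable[OF P phi_Fp[OF p]])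
  then show ?thesis using p by simp
qed

lemma PsiN_integrable:
  assumes p: "p \<ge> 1" and P: "P \<in> Pp p" and Q: "Q \<in> Pp p" and psi: "\<psi> \<in> PsiN p"
  shows "integrable (PiM UNIV (MM P Q S)) (\<psi> :: ('n::finite \<Rightarrow> real) \<Rightarrow> real)"
proof -
  let ?M = "PiM (UNIV :: 'n set) (MM P Q S)"
  interpret prob_space ?M by (intro prob_space_PiM prob_MM[OF P Q])
  have comp: "integrable ?M (\<lambda>x. phi p (x k))" for k
  proof -
    have int: "integrable (MM P Q S k) (phi p)"
      using phi_integrable[OF p P] phi_integrable[OF p Q] by (auto simp: MM_def)
    have "distr ?M (MM P Q S k) (\<lambda>x. x k) = MM P Q S k"
      by (intro distr_PiM_component prob_MM[OF P Q]) auto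
    with int have "integrable (distr ?M (MM P Q S k) (\<lambda>x. x k)) (phi p)" by simp
    then show ?thesis
      by (subst (asm) integrable_distr_eq) (auto intro: borel_measurable_integrable[OF int])
  qed
  have "integrable ?M (\<lambda>x. \<bar>\<psi> (\<lambda>_. 0)\<bar> + (1 / real CARD('n)) * (\<Sum>k\<in>UNIV. phi p (x k)))"
  proof (rule Bochner_Integration.integrable_add)
    show "integrable ?M (\<lambda>x. \<bar>\<psi> (\<lambda>_. 0)\<bar>)" by simp
    have "integrable ?M (\<lambda>x. \<Sum>k\<in>UNIV. phi p (x k))"
      by (rule Bochner_Integration.integrable_sum) (rule comp)
    then show "integrable ?M (\<lambda>x. (1 / real CARD('n)) * (\<Sum>k\<in>UNIV. phi p (x k)))"
      by (rule integrable_mult_right)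
  qed
  then show ?thesis
  proof (rule Bochner_Integration.integrable_bound)
    show "\<psi> \<in> borel_measurable ?M" by (rule PsiN_measurable_MM[OF P Q psi])
    show "AE x in ?M. norm (\<psi> x) \<le> norm (\<bar>\<psi> (\<lambda>_. 0)\<bar> + (1 / real CARD('n)) * (\<Sum>k\<in>UNIV. phi p (x k)))"
    proof (intro AE_I2)
      fix x :: "'n \<Rightarrow> real"
      have "\<bar>\<psi> x - \<psi> (\<lambda>_. 0)\<bar> \<le> (1 / real CARD('n)) * (\<Sum>k\<in>UNIV. cp p (x k) 0 * \<bar>x k - 0\<bar>)"
        using psi unfolding PsiN_def by blast
      also have "\<dots> = (1 / real CARD('n)) * (\<Sum>k\<in>UNIV. phi p (x k))"
        by (simp add: phi_def)
      finally have a: "\<bar>\<psi> x - \<psi> (\<lambda>_. 0)\<bar> \<le> (1 / real CARD('n)) * (\<Sum>k\<in>UNIV. phi p (x k))" .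
      have "0 \<le> (1 / real CARD('n)) * (\<Sum>k\<in>UNIV. phi p (x k))" using a by linarith
      then show "norm (\<psi> x) \<le> norm (\<bar>\<psi> (\<lambda>_. 0)\<bar> + (1 / real CARD('n)) * (\<Sum>k\<in>UNIV. phi p (x k)))"
        using a by simp
    qed
  qed
qed



lemma dFM_real:
  assumes "P \<in> Pp p" "Q \<in> Pp p"
  shows "dFM p P Q = ereal (real_of_ereal (dFM p P Q))"
  using dFM_nonneg[of p P Q] dFM_finite[OF assms] by (cases "dFM p P Q") auto

lemma step_bound:
  assumes p: "p \<ge> 1" and P: "P \<in> Pp p" and Q: "Q \<in> Pp p" and psi: "\<psi> \<in> PsiN p"
    and j: "j \<notin> S"
  shows "\<bar>integral\<^sup>L (PiM UNIV (MM P Q (insert j S))) (\<psi> :: ('n::finite \<Rightarrow> real) \<Rightarrow> real)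
          - integral\<^sup>L (PiM UNIV (MM P Q S)) \<psi>\<bar> \<le> real_of_ereal (dFM p P Q) / real CARD('n)"
proof -
  define D where "D = real_of_ereal (dFM p P Q)"
  define I where "I = UNIV - {j}"
  have UI: "(UNIV :: 'n set) = insert j I" "finite I" "j \<notin> I" unfolding I_def by auto
  interpret A: product_sigma_finite "MM P Q (insert j S)"
    by (simp add: product_sigma_finite_def prob_space_imp_sigma_finite prob_MM[OF P Q])
  interpret B: product_sigma_finite "MM P Q S"
    by (simp add: product_sigma_finite_def prob_space_imp_sigma_finite prob_MM[OF P Q])
  have PiI: "PiM I (MM P Q (insert j S)) = PiM I (MM P Q S)"
    by (rule PiM_cong) (auto simp: I_def MM_def)
  have jA: "MM P Q (insert j S) j = P" and jB: "MM P Q S j = Q" using j by (auto simp: MM_def)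
  let ?gP = "\<lambda>x. \<integral>y. \<psi> (x(j:=y)) \<partial>P"
  let ?gQ = "\<lambda>x. \<integral>y. \<psi> (x(j:=y)) \<partial>Q"
  have intA: "integrable (PiM (insert j I) (MM P Q (insert j S))) \<psi>"
    using PsiN_integrable[OF p P Q psi] UI(1) by metis
  have intB: "integrable (PiM (insert j I) (MM P Q S)) \<psi>"
    using PsiN_integrable[OF p P Q psi] UI(1) by metis
  have eqA: "integral\<^sup>L (PiM UNIV (MM P Q (insert j S))) \<psi> = integral\<^sup>L (PiM I (MM P Q S)) ?gP"
    using A.product_integral_insert[OF UI(2,3) intA] UI(1) PiI jA by simp
  have eqB: "integral\<^sup>L (PiM UNIV (MM P Q S)) \<psi> = integral\<^sup>L (PiM I (MM P Q S)) ?gQ"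
    using B.product_integral_insert[OF UI(2,3) intB] UI(1) jB by simp
  have igP: "integrable (PiM I (MM P Q S)) ?gP"
    using A.product_integrable_insert_slice[OF UI(2,3) intA] PiI jA by simp
  have igQ: "integrable (PiM I (MM P Q S)) ?gQ"
    using B.product_integrable_insert_slice[OF UI(2,3) intB] jB by simp
  interpret PI: prob_space "PiM I (MM P Q S)" by (intro prob_space_PiM prob_MM[OF P Q])
  have pt: "\<bar>?gP x - ?gQ x\<bar> \<le> D / real CARD('n)" for x
  proof -
    have "ereal \<bar>(\<integral>t. real CARD('n) * \<psi> (x(j := t)) \<partial>P) - (\<integral>t. real CARD('n) * \<psi> (x(j := t)) \<partial>Q)\<bar>
       \<le> dFM p P Q"
      by (rule pair_bound[OF P Q PsiN_slice[OF psi]])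
    also have "\<dots> = ereal D" unfolding D_def by (rule dFM_real[OF P Q])
    finally have "\<bar>real CARD('n) * ?gP x - real CARD('n) * ?gQ x\<bar> \<le> D" by simp
    then have "real CARD('n) * \<bar>?gP x - ?gQ x\<bar> \<le> D"
      by (simp add: right_diff_distrib[symmetric] abs_mult del: fun_upd_apply)
    then show ?thesis by (simp add: field_simps del: fun_upd_apply)
  qed
  have "\<bar>integral\<^sup>L (PiM I (MM P Q S)) ?gP - integral\<^sup>L (PiM I (MM P Q S)) ?gQ\<bar>
      = \<bar>integral\<^sup>L (PiM I (MM P Q S)) (\<lambda>x. ?gP x - ?gQ x)\<bar>"
    using igP igQ by simp
  also have "\<dots> \<le> integral\<^sup>L (PiM I (MM P Q S)) (\<lambda>x. \<bar>?gP x - ?gQ x\<bar>)"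
    by (rule integral_abs_bound)
  also have "\<dots> \<le> integral\<^sup>L (PiM I (MM P Q S)) (\<lambda>x. D / real CARD('n))"
    by (rule Bochner_Integration.integral_mono) (use igP igQ pt in auto)
  also have "\<dots> = D / real CARD('n)" by (simp add: PI.prob_space)
  finally show ?thesis using eqA eqB D_def by simp
qed

lemma telescope:
  assumes p: "p \<ge> 1" and P: "P \<in> Pp p" and Q: "Q \<in> Pp p" and psi: "\<psi> \<in> PsiN p"
    and S: "finite S"
  shows "\<bar>integral\<^sup>L (PiM UNIV (MM P Q S)) (\<psi> :: ('n::finite \<Rightarrow> real) \<Rightarrow> real)
          - integral\<^sup>L (PiM UNIV (MM P Q {})) \<psi>\<bar> \<le> real (card S) * (real_of_ereal (dFM p P Q) / real CARD('n))"
  using S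
proof (induction S rule: finite_induct)
  case empty then show ?case by simp
next
  case (insert j S)
  have "\<bar>integral\<^sup>L (PiM UNIV (MM P Q (insert j S))) \<psi> - integral\<^sup>L (PiM UNIV (MM P Q {})) \<psi>\<bar>
     \<le> \<bar>integral\<^sup>L (PiM UNIV (MM P Q (insert j S))) \<psi> - integral\<^sup>L (PiM UNIV (MM P Q S)) \<psi>\<bar>
      + \<bar>integral\<^sup>L (PiM UNIV (MM P Q S)) \<psi> - integral\<^sup>L (PiM UNIV (MM P Q {})) \<psi>\<bar>" by linarith
  also have "\<dots> \<le> real_of_ereal (dFM p P Q) / real CARD('n) + real (card S) * (real_of_ereal (dFM p P Q) / real CARD('n))"
    by (intro add_mono step_bound[OF p P Q psi insert(2)] insert(3))
  finally show ?case using insert(1,2) by (simp add: add_divide_distrib distrib_right)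
qed

theorem lemma1:
  fixes p :: real and P Q :: "real measure"
  assumes "p \<ge> 1" and "P \<in> Pp p" and "Q \<in> Pp p"
  shows "dPsi p (PiM (UNIV :: 'n::finite set) (\<lambda>_. P)) (PiM (UNIV :: 'n set) (\<lambda>_. Q))
           \<le> dFM p P Q \<and> dFM p P Q < \<infinity>"
proof
  show "dFM p P Q < \<infinity>" by (rule dFM_finite[OF assms(2,3)])
  have MU: "MM P Q (UNIV :: 'n set) = (\<lambda>_. P)" and ME: "MM P Q ({} :: 'n set) = (\<lambda>_. Q)"
    by (auto simp: MM_def)
  show "dPsi p (PiM (UNIV :: 'n::finite set) (\<lambda>_. P)) (PiM (UNIV :: 'n set) (\<lambda>_. Q)) \<le> dFM p P Q"
    unfolding dPsi_def
  proof (rule SUP_least)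
    fix \<psi> :: "('n \<Rightarrow> real) \<Rightarrow> real" assume psi: "\<psi> \<in> PsiN p"
    have iP: "integrable (PiM UNIV (\<lambda>_. P)) \<psi>"
      using PsiN_integrable[OF assms psi, of UNIV] MU by simp
    have iQ: "integrable (PiM UNIV (\<lambda>_. Q)) \<psi>"
      using PsiN_integrable[OF assms psi, of "{}"] ME by simp
    have "\<bar>integral\<^sup>L (PiM UNIV (\<lambda>_. P)) \<psi> - integral\<^sup>L (PiM UNIV (\<lambda>_. Q)) \<psi>\<bar>
        \<le> real (card (UNIV :: 'n set)) * (real_of_ereal (dFM p P Q) / real CARD('n))"
      using telescope[OF assms psi, of UNIV] MU ME by simp
    also have "\<dots> = real_of_ereal (dFM p P Q)" by simp
    finally have "ereal \<bar>integral\<^sup>L (PiM UNIV (\<lambda>_. P)) \<psi> - integral\<^sup>L (PiM UNIV (\<lambda>_. Q)) \<psi>\<bar>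
        \<le> ereal (real_of_ereal (dFM p P Q))" by simp
    also have "\<dots> = dFM p P Q" using dFM_real[OF assms(2,3)] by simp
    finally show "int_diff (PiM UNIV (\<lambda>_. P)) (PiM UNIV (\<lambda>_. Q)) \<psi> \<le> dFM p P Q"
      unfolding int_diff_def using iP iQ by simp
  qed
qed


end
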